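(* Assume the abstract framework described in the context. Let $u\in\mathcal{H}_2^\Omega$ satisfy $(Lu)|_\Omega=0$, and let $U\in\mathcal{H}_2$ be any element with $U|_\Omega=u$. Then $$u=-\mathbf{D}^B_\Omega(\operatorname{Tr}_2U)+(\mathbf{S}^L_\Omega(\mathbf{M}^\Omega_Bu))|_\Omega,\qquad 0=\mathbf{D}^B_{\mathcal{C}}(\operatorname{Tr}_2U)+(\mathbf{S}^L_{\mathcal{C}}(\mathbf{M}^\Omega_Bu))|_{\mathcal{C}}.$$
   Context: Abstract framework. Let $\mathcal{H}_1,\mathcal{H}_2$ be complex Hilbert spaces, and for $j=1,2$ let $\widehat{\mathcal{H}}_j^\Omega$, $\widehat{\mathcal{H}}_j^{\mathcal{C}}$, $\widehat{\mathcal{D}}_j$ be normed (or seminormed) vector spaces. We are given bounded linear operators $\operatorname{Tr}_j:\mathcal{H}_j\to\widehat{\mathcal{D}}_j$ and bounded linear "restriction" operators $F\mapsto F|_\Omega\in\widehat{\mathcal{H}}_j^\Omega$ and $F\mapsto F|_{\mathcal{C}}\in\widehat{\mathcal{H}}_j^{\mathcal{C}}$ on $\mathcal{H}_j$. Define $\mathcal{H}_j^\Omega=\{F|_\Omega:F\in\mathcal{H}_j\}$ with norm $\|f\|=\inf\{\|F\|_{\mathcal{H}_j}:F|_\Omega=f\}$, similarly $\mathcal{H}_j^{\mathcal{C}}$, and $\mathcal{D}_j=\{\operatorname{Tr}_jF:F\in\mathcal{H}_j\}$ with the analogous quotient norm (modulo elements of norm zero). Let $\mathcal{N}_2=\mathcal{D}_1^*$,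 $\mathcal{N}_1=\mathcal{D}_2^*$ with duality pairings $\langle\cdot,\cdot\rangle$. We are given bounded bilinear forms $B:\mathcal{H}_1\times\mathcal{H}_2\to\mathbb{C}$, $B^\Omega:\mathcal{H}_1^\Omega\times\mathcal{H}_2^\Omega\to\mathbb{C}$, $B^{\mathcal{C}}:\mathcal{H}_1^{\mathcal{C}}\times\mathcal{H}_2^{\mathcal{C}}\to\mathbb{C}$, and $\lambda>0$ such that for all $u\in\mathcal{H}_1$, $v\in\mathcal{H}_2$, $\varphi,\psi\in\mathcal{H}_j$: (i) $\sup_{w\ne0}|B(w,v)|/\|w\|_{\mathcal{H}_1}\ge\lambda\|v\|_{\mathcal{H}_2}$ and $\sup_{w\ne0}|B(u,w)|/\|w\|_{\mathcal{H}_2}\ge\lambda\|u\|_{\mathcal{H}_1}$; (ii) $B(u,v)=B^\Omega(u|_\Omega,v|_\Omega)+B^{\mathcal{C}}(u|_{\mathcal{C}},v|_{\mathcal{C}})$; (iii) if $\operatorname{Tr}_j\varphi=\operatorname{Tr}_j\psi$ then there is $w\in\mathcal{H}_j$ with $w|_\Omega=\varphi|_\Omega$, $w|_{\mathcal{C}}=\psi|_{\mathcal{C}}$, $\operatorname{Tr}_jw=\operatorname{Tr}_j\varphi$. Definitions: for $u\in\mathcal{H}_2^\Omega$, $(Lu)|_\Omega=0$ means $B^\Omega(\varphi|_\Omega,u)=0$ for all $\varphi\in\mathcal{H}_1$ with $\operatorname{Tr}_1\varphi=0$. For such $u$ the Neumann boundary value $\mathbf{M}^\Omega_Bu\in\mathcal{N}_2$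 is defined by $\langle\operatorname{Tr}_1\varphi,\mathbf{M}^\Omega_Bu\rangle=B^\Omega(\varphi|_\Omega,u)$ for all $\varphi\in\mathcal{H}_1$ (well defined). For $u\in\mathcal{H}_2^\Omega$, $L(u\mathbf{1}_\Omega)\in\mathcal{H}_1^*$ is $\langle\varphi,L(u\mathbf{1}_\Omega)\rangle=B^\Omega(\varphi|_\Omega,u)$, and analogously $L(u\mathbf{1}_{\mathcal{C}})$ for $u\in\mathcal H_2^{\mathcal C}$ with $B^{\mathcal{C}}$; for $F\in\mathcal H_2$, $L(\mathbf 1_\Omega F)=L(F|_\Omega\mathbf 1_\Omega)$. Newton potential: for $H\in\mathcal{H}_1^*$, $\Pi^LH\in\mathcal{H}_2$ is the unique element with $B(\varphi,\Pi^LH)=\langle\varphi,H\rangle$ for all $\varphi\in\mathcal{H}_1$. Single layer potential: for $g\in\mathcal{N}_2$, $\mathbf{S}^L_\Omega g=\mathbf{S}^L_{\mathcal{C}}g$ is the unique element of $\mathcal{H}_2$ with $B(\varphi,\mathbf{S}^L_\Omega g)=\langle\operatorname{Tr}_1\varphi,g\rangle$ for all $\varphi\in\mathcal{H}_1$. Double layer potentials: for $f\in\mathcal{D}_2$ and any $F\in\mathcal{H}_2$ with $\operatorname{Tr}_2F=f$, $\mathbf{D}^B_\Omega f=-F|_\Omega+(\Pi^L(L(\mathbf{1}_\Omega F)))|_\Omega\in\mathcal{H}_2^\Omega$ and $\mathbf{D}^B_{\mathcal{C}}f=-F|_{\mathcal{C}}+(\Pi^L(L(\mathbf{1}_{\mathcal{C}}F)))|_{\mathcal{C}}\in\mathcal{H}_2^{\mathcal{C}}$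 (independent of the choice of $F$). *)

theory Defs
  imports Complex_Main "HOL-Library.Extended_Nonnegative_Real"
begin

definition hnorm :: "('a \<Rightarrow> 'a \<Rightarrow> complex) \<Rightarrow> 'a \<Rightarrow> real" where
  "hnorm ip x = sqrt (Re (ip x x))"

definition complex_hilbert :: "(complex \<Rightarrow> 'a::ab_group_add \<Rightarrow> 'a) \<Rightarrow> ('a \<Rightarrow> 'a \<Rightarrow> complex) \<Rightarrow> bool" where
  "complex_hilbert sc ip \<longleftrightarrow>
     Vector_Spaces.vector_space sc \<and>
     (\<forall>x y z. ip (x + y) z = ip x z + ip y z) \<and>
     (\<forall>c x y. ip (sc c x) y = c * ip x y) \<and>
     (\<forall>x y. ip y x = cnj (ip x y)) \<and>
     (\<forall>x. 0 \<le> Re (ip x x)) \<and>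
     (\<forall>x. ip x x = 0 \<longrightarrow> x = 0) \<and>
     (\<forall>X :: nat \<Rightarrow> 'a.
        (\<forall>e>0. \<exists>N. \<forall>m\<ge>N. \<forall>n\<ge>N. hnorm ip (X m - X n) < e) \<longrightarrow>
        (\<exists>l. \<forall>e>0. \<exists>N. \<forall>n\<ge>N. hnorm ip (X n - l) < e))"

definition seminormed_space :: "(complex \<Rightarrow> 'a::ab_group_add \<Rightarrow> 'a) \<Rightarrow> ('a \<Rightarrow> real) \<Rightarrow> bool" where
  "seminormed_space sc N \<longleftrightarrow>
     Vector_Spaces.vector_space sc \<and>
     (\<forall>x. 0 \<le> N x) \<and>
     (\<forall>x y. N (x + y) \<le> N x + N y) \<and>
     (\<forall>c x. N (sc c x) = cmod c * N x)"

definition bounded_lin ::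
  "(complex \<Rightarrow> 'a::ab_group_add \<Rightarrow> 'a) \<Rightarrow> ('a \<Rightarrow> real) \<Rightarrow>
   (complex \<Rightarrow> 'b::ab_group_add \<Rightarrow> 'b) \<Rightarrow> ('b \<Rightarrow> real) \<Rightarrow> ('a \<Rightarrow> 'b) \<Rightarrow> bool" where
  "bounded_lin sa Na sb Nb f \<longleftrightarrow>
     Vector_Spaces.linear sa sb f \<and> (\<exists>K. \<forall>x. Nb (f x) \<le> K * Na x)"

definition qnorm :: "('a \<Rightarrow> real) \<Rightarrow> ('a \<Rightarrow> 'b) \<Rightarrow> 'b \<Rightarrow> real" where
  "qnorm N R y = Inf (N ` {F. R F = y})"

definition bounded_bilin_on ::
  "'a set \<Rightarrow> (complex \<Rightarrow> 'a::ab_group_add \<Rightarrow> 'a) \<Rightarrow> ('a \<Rightarrow> real) \<Rightarrow>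
   'c set \<Rightarrow> (complex \<Rightarrow> 'c::ab_group_add \<Rightarrow> 'c) \<Rightarrow> ('c \<Rightarrow> real) \<Rightarrow>
   ('a \<Rightarrow> 'c \<Rightarrow> complex) \<Rightarrow> bool" where
  "bounded_bilin_on A sa Na C sc Nc b \<longleftrightarrow>
     (\<forall>x\<in>A. \<forall>x'\<in>A. \<forall>y\<in>C. b (x + x') y = b x y + b x' y) \<and>
     (\<forall>c. \<forall>x\<in>A. \<forall>y\<in>C. b (sa c x) y = c * b x y) \<and>
     (\<forall>x\<in>A. \<forall>y\<in>C. \<forall>y'\<in>C. b x (y + y') = b x y + b x y') \<and>
     (\<forall>c. \<forall>x\<in>A. \<forall>y\<in>C. b x (sc c y) = c * b x y) \<and>
     (\<exists>K. \<forall>x\<in>A. \<forall>y\<in>C. cmod (b x y) \<le> K * Na x * Nc y)"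

text \<open>Types: 'h1,'h2 = H_1,H_2; 'o_j = hat H_j^Omega; 'c_j = hat H_j^C; 'd_j = hat D_j.\<close>
record ('h1, 'h2, 'o1, 'o2, 'c1, 'c2, 'd1, 'd2) frame =
  sc1 :: "complex \<Rightarrow> 'h1 \<Rightarrow> 'h1"
  ip1 :: "'h1 \<Rightarrow> 'h1 \<Rightarrow> complex"
  sc2 :: "complex \<Rightarrow> 'h2 \<Rightarrow> 'h2"
  ip2 :: "'h2 \<Rightarrow> 'h2 \<Rightarrow> complex"
  scO1 :: "complex \<Rightarrow> 'o1 \<Rightarrow> 'o1"
  nO1 :: "'o1 \<Rightarrow> real"
  scO2 :: "complex \<Rightarrow> 'o2 \<Rightarrow> 'o2"
  nO2 :: "'o2 \<Rightarrow> real"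
  scC1 :: "complex \<Rightarrow> 'c1 \<Rightarrow> 'c1"
  nC1 :: "'c1 \<Rightarrow> real"
  scC2 :: "complex \<Rightarrow> 'c2 \<Rightarrow> 'c2"
  nC2 :: "'c2 \<Rightarrow> real"
  scD1 :: "complex \<Rightarrow> 'd1 \<Rightarrow> 'd1"
  nD1 :: "'d1 \<Rightarrow> real"
  scD2 :: "complex \<Rightarrow> 'd2 \<Rightarrow> 'd2"
  nD2 :: "'d2 \<Rightarrow> real"
  tr1 :: "'h1 \<Rightarrow> 'd1"
  tr2 :: "'h2 \<Rightarrow> 'd2"
  rO1 :: "'h1 \<Rightarrow> 'o1"
  rO2 :: "'h2 \<Rightarrow> 'o2"
  rC1 :: "'h1 \<Rightarrow> 'c1"
  rC2 :: "'h2 \<Rightarrow> 'c2"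
  bf :: "'h1 \<Rightarrow> 'h2 \<Rightarrow> complex"
  bO :: "'o1 \<Rightarrow> 'o2 \<Rightarrow> complex"
  bC :: "'c1 \<Rightarrow> 'c2 \<Rightarrow> complex"
  lam :: real

definition abstract_framework :: "('h1::ab_group_add, 'h2::ab_group_add, 'o1::ab_group_add, 'o2::ab_group_add, 'c1::ab_group_add, 'c2::ab_group_add, 'd1::ab_group_add, 'd2::ab_group_add) frame \<Rightarrow> bool" where
  "abstract_framework F \<longleftrightarrow>
     complex_hilbert (sc1 F) (ip1 F) \<and> complex_hilbert (sc2 F) (ip2 F) \<and>
     seminormed_space (scO1 F) (nO1 F) \<and> seminormed_space (scO2 F) (nO2 F) \<and>
     seminormed_space (scC1 F) (nC1 F) \<and> seminormed_space (scC2 F) (nC2 F) \<and>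
     seminormed_space (scD1 F) (nD1 F) \<and> seminormed_space (scD2 F) (nD2 F) \<and>
     bounded_lin (sc1 F) (hnorm (ip1 F)) (scD1 F) (nD1 F) (tr1 F) \<and>
     bounded_lin (sc2 F) (hnorm (ip2 F)) (scD2 F) (nD2 F) (tr2 F) \<and>
     bounded_lin (sc1 F) (hnorm (ip1 F)) (scO1 F) (nO1 F) (rO1 F) \<and>
     bounded_lin (sc2 F) (hnorm (ip2 F)) (scO2 F) (nO2 F) (rO2 F) \<and>
     bounded_lin (sc1 F) (hnorm (ip1 F)) (scC1 F) (nC1 F) (rC1 F) \<and>
     bounded_lin (sc2 F) (hnorm (ip2 F)) (scC2 F) (nC2 F) (rC2 F) \<and>
     bounded_bilin_on UNIV (sc1 F) (hnorm (ip1 F)) UNIV (sc2 F) (hnorm (ip2 F)) (bf F) \<and>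
     bounded_bilin_on (range (rO1 F)) (scO1 F) (qnorm (hnorm (ip1 F)) (rO1 F))
                      (range (rO2 F)) (scO2 F) (qnorm (hnorm (ip2 F)) (rO2 F)) (bO F) \<and>
     bounded_bilin_on (range (rC1 F)) (scC1 F) (qnorm (hnorm (ip1 F)) (rC1 F))
                      (range (rC2 F)) (scC2 F) (qnorm (hnorm (ip2 F)) (rC2 F)) (bC F) \<and>
     0 < lam F \<and>
     \<comment> \<open>(i) inf-sup conditions\<close>
     (\<forall>v. ennreal (lam F * hnorm (ip2 F) v)
            \<le> (SUP w\<in>{w. w \<noteq> 0}. ennreal (cmod (bf F w v) / hnorm (ip1 F) w))) \<and>
     (\<forall>u. ennreal (lam F * hnorm (ip1 F) u)
            \<le> (SUP w\<in>{w. w \<noteq> 0}. ennreal (cmod (bf F u w) / hnorm (ip2 F) w))) \<and>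
     \<comment> \<open>(ii) splitting of B\<close>
     (\<forall>u v. bf F u v = bO F (rO1 F u) (rO2 F v) + bC F (rC1 F u) (rC2 F v)) \<and>
     \<comment> \<open>(iii) gluing\<close>
     (\<forall>\<phi> \<psi>. tr1 F \<phi> = tr1 F \<psi> \<longrightarrow>
        (\<exists>w. rO1 F w = rO1 F \<phi> \<and> rC1 F w = rC1 F \<psi> \<and> tr1 F w = tr1 F \<phi>)) \<and>
     (\<forall>\<phi> \<psi>. tr2 F \<phi> = tr2 F \<psi> \<longrightarrow>
        (\<exists>w. rO2 F w = rO2 F \<phi> \<and> rC2 F w = rC2 F \<psi> \<and> tr2 F w = tr2 F \<phi>))"

definition HO2 :: "('h1::ab_group_add, 'h2::ab_group_add, 'o1::ab_group_add, 'o2::ab_group_add, 'c1::ab_group_add, 'c2::ab_group_add, 'd1::ab_group_add, 'd2::ab_group_add) frame \<Rightarrow> 'o2 set" where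
  "HO2 F = range (rO2 F)"

definition L_Omega_zero :: "('h1::ab_group_add, 'h2::ab_group_add, 'o1::ab_group_add, 'o2::ab_group_add, 'c1::ab_group_add, 'c2::ab_group_add, 'd1::ab_group_add, 'd2::ab_group_add) frame \<Rightarrow> 'o2 \<Rightarrow> bool" where
  "L_Omega_zero F u \<longleftrightarrow> (\<forall>\<phi>. tr1 F \<phi> = 0 \<longrightarrow> bO F (rO1 F \<phi>) u = 0)"

text \<open>N_2 = D_1^*: bounded linear functionals on D_1 = range tr1 w.r.t. the quotient
  seminorm; represented as functions on hat D_1 that vanish off D_1 (canonical
  representative); the pairing <d, g> is g d.\<close>
definition N2 :: "('h1::ab_group_add, 'h2::ab_group_add, 'o1::ab_group_add, 'o2::ab_group_add, 'c1::ab_group_add, 'c2::ab_group_add, 'd1::ab_group_add, 'd2::ab_group_add) frame \<Rightarrow> ('d1 \<Rightarrow> complex) set" where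
  "N2 F = {g. (\<forall>x\<in>range (tr1 F). \<forall>y\<in>range (tr1 F). g (x + y) = g x + g y) \<and>
              (\<forall>c. \<forall>x\<in>range (tr1 F). g (scD1 F c x) = c * g x) \<and>
              (\<exists>K. \<forall>x\<in>range (tr1 F). cmod (g x) \<le> K * qnorm (hnorm (ip1 F)) (tr1 F) x) \<and>
              (\<forall>x. x \<notin> range (tr1 F) \<longrightarrow> g x = 0)}"

definition neumann :: "('h1::ab_group_add, 'h2::ab_group_add, 'o1::ab_group_add, 'o2::ab_group_add, 'c1::ab_group_add, 'c2::ab_group_add, 'd1::ab_group_add, 'd2::ab_group_add) frame \<Rightarrow> 'o2 \<Rightarrow> 'd1 \<Rightarrow> complex" where
  "neumann F u = (THE g. g \<in> N2 F \<and> (\<forall>\<phi>. g (tr1 F \<phi>) = bO F (rO1 F \<phi>) u))"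

definition L_Om :: "('h1::ab_group_add, 'h2::ab_group_add, 'o1::ab_group_add, 'o2::ab_group_add, 'c1::ab_group_add, 'c2::ab_group_add, 'd1::ab_group_add, 'd2::ab_group_add) frame \<Rightarrow> 'o2 \<Rightarrow> 'h1 \<Rightarrow> complex" where
  "L_Om F u = (\<lambda>\<phi>. bO F (rO1 F \<phi>) u)"

definition L_C :: "('h1::ab_group_add, 'h2::ab_group_add, 'o1::ab_group_add, 'o2::ab_group_add, 'c1::ab_group_add, 'c2::ab_group_add, 'd1::ab_group_add, 'd2::ab_group_add) frame \<Rightarrow> 'c2 \<Rightarrow> 'h1 \<Rightarrow> complex" where
  "L_C F u = (\<lambda>\<phi>. bC F (rC1 F \<phi>) u)"

definition newton :: "('h1::ab_group_add, 'h2::ab_group_add, 'o1::ab_group_add, 'o2::ab_group_add, 'c1::ab_group_add, 'c2::ab_group_add, 'd1::ab_group_add, 'd2::ab_group_add) frame \<Rightarrow> ('h1 \<Rightarrow> complex) \<Rightarrow> 'h2" where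
  "newton F H = (THE v. \<forall>\<phi>. bf F \<phi> v = H \<phi>)"

text \<open>Single layer potential S^L_Omega g = S^L_C g\<close>
definition single_layer :: "('h1::ab_group_add, 'h2::ab_group_add, 'o1::ab_group_add, 'o2::ab_group_add, 'c1::ab_group_add, 'c2::ab_group_add, 'd1::ab_group_add, 'd2::ab_group_add) frame \<Rightarrow> ('d1 \<Rightarrow> complex) \<Rightarrow> 'h2" where
  "single_layer F g = (THE v. \<forall>\<phi>. bf F \<phi> v = g (tr1 F \<phi>))"

definition double_layer_Om :: "('h1::ab_group_add, 'h2::ab_group_add, 'o1::ab_group_add, 'o2::ab_group_add, 'c1::ab_group_add, 'c2::ab_group_add, 'd1::ab_group_add, 'd2::ab_group_add) frame \<Rightarrow> 'd2 \<Rightarrow> 'o2" where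
  "double_layer_Om F f =
     (let G = (SOME G. tr2 F G = f) in - rO2 F G + rO2 F (newton F (L_Om F (rO2 F G))))"

definition double_layer_C :: "('h1::ab_group_add, 'h2::ab_group_add, 'o1::ab_group_add, 'o2::ab_group_add, 'c1::ab_group_add, 'c2::ab_group_add, 'd1::ab_group_add, 'd2::ab_group_add) frame \<Rightarrow> 'd2 \<Rightarrow> 'c2" where
  "double_layer_C F f =
     (let G = (SOME G. tr2 F G = f) in - rC2 F G + rC2 F (newton F (L_C F (rC2 F G))))"

end

theory Submission
  imports Defs
begin


lemma lin_add: "Vector_Spaces.linear s1 s2 f \<Longrightarrow> f (x+y) = f x + f y"
  using module_hom.add linear_iff_module_hom by metis
lemma lin_scale: "Vector_Spaces.linear s1 s2 f \<Longrightarrow> f (s1 c x) = s2 c (f x)"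
  using module_hom.scale linear_iff_module_hom by metis
lemma lin_diff: "Vector_Spaces.linear s1 s2 f \<Longrightarrow> f (x-y) = f x - f y"
  using module_hom.diff linear_iff_module_hom by metis
lemma lin_zero: "Vector_Spaces.linear s1 s2 f \<Longrightarrow> f 0 = 0"
  using module_hom.zero linear_iff_module_hom by metis

lemma sq_less: "(a::real)^2 < b^2 \<Longrightarrow> 0 \<le> b \<Longrightarrow> a < b"
  using power_less_imp_less_base by blast

locale chs =
  fixes sc :: "complex \<Rightarrow> 'a::ab_group_add \<Rightarrow> 'a" and ip :: "'a \<Rightarrow> 'a \<Rightarrow> complex"
  assumes H: "complex_hilbert sc ip"
begin

abbreviation nm where "nm \<equiv> hnorm ip"

lemma vs: "vector_space sc" using H unfolding complex_hilbert_def by blast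
sublocale V: vector_space sc by (rule vs)

lemma ip_add1: "ip (x + y) z = ip x z + ip y z" using H unfolding complex_hilbert_def by blast
lemma ip_sc1: "ip (sc c x) y = c * ip x y" using H unfolding complex_hilbert_def by blast
lemma ip_cnj: "ip y x = cnj (ip x y)" using H unfolding complex_hilbert_def by blast
lemma ip_pos: "0 \<le> Re (ip x x)" using H unfolding complex_hilbert_def by blast
lemma ip_def0: "ip x x = 0 \<Longrightarrow> x = 0" using H unfolding complex_hilbert_def by blast
lemma complete: fixes X :: "nat \<Rightarrow> 'a" assumes "(\<forall>e>0. \<exists>N. \<forall>m\<ge>N. \<forall>n\<ge>N. nm (X m - X n) < e)" shows
        "(\<exists>l. \<forall>e>0. \<exists>N. \<forall>n\<ge>N. nm (X n - l) < e)"
proof -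
  have "\<forall>X :: nat \<Rightarrow> 'a.
        (\<forall>e>0. \<exists>N. \<forall>m\<ge>N. \<forall>n\<ge>N. nm (X m - X n) < e) \<longrightarrow>
        (\<exists>l. \<forall>e>0. \<exists>N. \<forall>n\<ge>N. nm (X n - l) < e)" using H unfolding complex_hilbert_def by blast
  then show ?thesis using assms by blast
qed

lemma ip_zero1[simp]: "ip 0 z = 0" using ip_add1[of 0 0 z] by simp
lemma ip_minus1: "ip (- x) z = - ip x z"
proof -
  have h: "ip x z + ip (-x) z = 0" using ip_add1[of x "-x" z] by simp
  have "ip (-x) z = (ip x z + ip (-x) z) - ip x z" by simp
  with h show ?thesis by simp
qed
lemma ip_diff1: "ip (x - y) z = ip x z - ip y z" using ip_add1[of x "-y" z] ip_minus1 by simp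
lemma ip_add2: "ip z (x + y) = ip z x + ip z y" by (metis ip_cnj ip_add1 complex_cnj_add)
lemma ip_zero2[simp]: "ip z 0 = 0" by (metis ip_cnj ip_zero1 complex_cnj_zero)
lemma ip_diff2: "ip z (x - y) = ip z x - ip z y" by (metis ip_cnj ip_diff1 complex_cnj_diff)
lemma ip_sc2: "ip x (sc c y) = cnj c * ip x y" by (metis ip_cnj ip_sc1 complex_cnj_mult)

lemma ip_self_real: "ip x x = complex_of_real (Re (ip x x))"
proof -
  have "ip x x = cnj (ip x x)" by (rule ip_cnj)
  from arg_cong[OF this, of Im] have "Im (ip x x) = 0" by simp
  thus ?thesis by (simp add: complex_eq_iff)
qed

lemma nm_nonneg: "0 \<le> nm x" unfolding hnorm_def using ip_pos[of x] by simp
lemma nm_sq: "(nm x)^2 = Re (ip x x)" unfolding hnorm_def using ip_pos[of x] by simp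
lemma ip_self: "ip x x = complex_of_real ((nm x)^2)" using ip_self_real nm_sq by simp
lemma nm_zero_iff: "nm x = 0 \<longleftrightarrow> x = 0"
proof
  assume "nm x = 0" then have "ip x x = 0" using ip_self by simp
  thus "x = 0" by (rule ip_def0)
qed (simp add: hnorm_def)
lemma nm_0[simp]: "nm 0 = 0" by (simp add: nm_zero_iff)

lemma ip_expand: "ip (x - sc t y) (x - sc t y) = ip x x - cnj t * ip x y - t * cnj (ip x y) + t * cnj t * ip y y"
proof -
  have a: "ip x (sc t y) = cnj t * ip x y" by (rule ip_sc2)
  have b: "ip (sc t y) x = t * cnj (ip x y)" by (simp add: ip_sc1 ip_cnj[of x y])
  have c: "ip (sc t y) (sc t y) = t * cnj t * ip y y" by (simp add: ip_sc1 ip_sc2)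
  show ?thesis unfolding ip_diff1 ip_diff2 a b c by (simp add: algebra_simps)
qed

lemma key: assumes "y \<noteq> 0"
  shows "Re (ip (x - sc (ip x y / ip y y) y) (x - sc (ip x y / ip y y) y)) = (nm x)^2 - (cmod (ip x y))^2 / (nm y)^2"
proof -
  define c where "c = nm y ^ 2"
  have c0: "c > 0" using assms nm_zero_iff nm_nonneg unfolding c_def by (metis zero_less_power2)
  have yy: "ip y y = complex_of_real c" using ip_self c_def by simp
  define b where "b = ip x y"
  have "ip (x - sc (b / complex_of_real c) y) (x - sc (b / complex_of_real c) y)
        = ip x x - b * cnj b / complex_of_real c"
    unfolding ip_expand b_def[symmetric] yy using c0
    by (simp add: field_simps)
  moreover have "b * cnj b = complex_of_real ((cmod b)^2)" by (rule complex_norm_square[symmetric])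
  ultimately show ?thesis unfolding b_def yy c_def[symmetric] using ip_self[of x]
    by (metis Re_complex_of_real minus_complex.sel(1) of_real_divide)
qed

lemma cs: "cmod (ip x y) \<le> nm x * nm y"
proof (cases "y = 0")
  case True thus ?thesis by simp
next
  case False
  have "0 \<le> (nm x)^2 - (cmod (ip x y))^2 / (nm y)^2" using key[OF False] ip_pos by metis
  moreover have "nm y > 0" using False nm_zero_iff nm_nonneg by (metis less_eq_real_def)
  ultimately have "(cmod (ip x y))^2 \<le> (nm x * nm y)^2" by (simp add: field_simps power_mult_distrib)
  thus ?thesis using nm_nonneg by (meson mult_nonneg_nonneg power2_le_imp_le)
qed


lemma ip_minus2: "ip z (- x) = - ip z x" using ip_diff2[of z 0 x] by simp
lemma nm_minus: "nm (- x) = nm x" unfolding hnorm_def by (simp add: ip_minus1 ip_minus2)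
lemma nm_commute: "nm (x - y) = nm (y - x)" using nm_minus[of "x - y"] by simp

lemma re_ip_sym: "Re (ip y x) = Re (ip x y)" by (simp add: ip_cnj[of x y])

lemma nm_add_sq: "(nm (x + y))^2 = (nm x)^2 + (nm y)^2 + 2 * Re (ip x y)"
  unfolding nm_sq by (simp add: ip_add1 ip_add2 re_ip_sym[of x y])
lemma nm_diff_sq: "(nm (x - y))^2 = (nm x)^2 + (nm y)^2 - 2 * Re (ip x y)"
  unfolding nm_sq by (simp add: ip_diff1 ip_diff2 re_ip_sym[of x y])

lemma nm_tri: "nm (x + y) \<le> nm x + nm y"
proof -
  have "Re (ip x y) \<le> nm x * nm y" using cs[of x y] complex_Re_le_cmod order_trans by blast
  then have "(nm (x + y))^2 \<le> (nm x + nm y)^2" unfolding nm_add_sq by (simp add: power2_sum)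
  thus ?thesis using nm_nonneg by (meson add_nonneg_nonneg power2_le_imp_le)
qed
lemma nm_tri3: "nm (x - z) \<le> nm (x - y) + nm (y - z)"
  using nm_tri[of "x - y" "y - z"] by simp

lemma para: "(nm (a + b))^2 + (nm (a - b))^2 = 2 * (nm a)^2 + 2 * (nm b)^2"
  unfolding nm_add_sq nm_diff_sq by simp

lemma nm_sc: "nm (sc c x) = cmod c * nm x"
proof -
  have "ip (sc c x) (sc c x) = (c * cnj c) * ip x x" by (simp add: ip_sc1 ip_sc2)
  also have "\<dots> = complex_of_real ((cmod c)^2) * complex_of_real ((nm x)^2)" using ip_self[of x]
    complex_norm_square[of c] by simp
  also have "\<dots> = complex_of_real ((cmod c * nm x)^2)" by (simp add: power_mult_distrib)
  finally have "(nm (sc c x))^2 = (cmod c * nm x)^2" using nm_sq by simp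
  thus ?thesis using nm_nonneg by (simp add: power2_eq_iff_nonneg)
qed

definition cauchy :: "(nat \<Rightarrow> 'a) \<Rightarrow> bool" where
  "cauchy X \<longleftrightarrow> (\<forall>e>0. \<exists>N. \<forall>m\<ge>N. \<forall>n\<ge>N. nm (X m - X n) < e)"
definition conv :: "(nat \<Rightarrow> 'a) \<Rightarrow> 'a \<Rightarrow> bool" where
  "conv X l \<longleftrightarrow> (\<forall>e>0. \<exists>N. \<forall>n\<ge>N. nm (X n - l) < e)"

lemma complete': "cauchy X \<Longrightarrow> \<exists>l. conv X l" unfolding cauchy_def conv_def by (rule complete)

lemma sc2: "sc 2 x = x + x"
proof -
  have "sc (1 + 1) x = sc 1 x + sc 1 x" by (rule V.scale_left_distrib)
  moreover have "(1::complex) + 1 = 2" by simp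
  ultimately show ?thesis by simp
qed

lemma small_le0: assumes "K \<ge> 0" "\<forall>e>0. a \<le> K * e" shows "a \<le> (0::real)"
proof (rule ccontr)
  assume "\<not> a \<le> 0" then have a: "a > 0" by simp
  have "a / (K + 1) > 0" using a assms(1) by simp
  then have "a \<le> K * (a / (K + 1))" using assms(2) by blast
  also have "\<dots> < a" using a assms(1) by (simp add: field_simps)
  finally show False by simp
qed


lemma proj:
  assumes M0: "0 \<in> M" and Madd: "\<And>a b. a \<in> M \<Longrightarrow> b \<in> M \<Longrightarrow> a + b \<in> M"
    and Msc: "\<And>c a. a \<in> M \<Longrightarrow> sc c a \<in> M"
    and Mcomp: "\<And>X. (\<forall>k. X k \<in> M) \<Longrightarrow> cauchy X \<Longrightarrow> \<exists>l\<in>M. conv X l"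
  shows "\<exists>p\<in>M. \<forall>m\<in>M. ip (x - p) m = 0"
proof -
  define D where "D = (\<lambda>m. (nm (x - m))^2) ` M"
  define d where "d = Inf D"
  have Dne: "D \<noteq> {}" using M0 unfolding D_def by blast
  have Dbdd: "bdd_below D" unfolding D_def by (rule bdd_belowI[of _ 0]) auto
  have low: "d \<le> (nm (x - m))^2" if "m \<in> M" for m
    unfolding d_def using Dbdd that unfolding D_def by (auto intro: cInf_lower)
  have d0: "d \<ge> 0" unfolding d_def using Dne by (rule cInf_greatest) (auto simp: D_def)
  have "\<forall>k::nat. \<exists>m. m \<in> M \<and> (nm (x - m))^2 < d + 1 / (real k + 1)"
  proof
    fix k :: nat
    have "Inf D < d + 1 / (real k + 1)" unfolding d_def by simp
    from cInf_lessD[OF Dne this] show "\<exists>m. m \<in> M \<and> (nm (x - m))^2 < d + 1 / (real k + 1)"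
      unfolding D_def by auto
  qed
  then obtain X where X: "\<And>k. X k \<in> M" "\<And>k. (nm (x - X k))^2 < d + 1 / (real k + 1)"
    by metis
  have pb: "(nm (X j - X k))^2 < 2 * (1 / (real j + 1)) + 2 * (1 / (real k + 1))" for j k
  proof -
    define a where "a = x - X j"
    define b where "b = x - X k"
    define z where "z = x - sc (1/2) (X j + X k)"
    have zM: "sc (1/2) (X j + X k) \<in> M" using X(1) Madd Msc by blast
    have s1: "sc 2 (sc (1/2) (X j + X k)) = X j + X k" by (simp add: V.scale_scale)
    have s2: "sc 2 z = (x + x) - (X j + X k)" unfolding z_def V.scale_right_diff_distrib s1 sc2[of x] ..
    have s3: "a + b = (x + x) - (X j + X k)" unfolding a_def b_def by (simp add: algebra_simps)
    have n1: "nm (a + b) = 2 * nm z" unfolding s3 s2[symmetric] nm_sc by simp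
    have n2: "(nm (a + b))^2 = 4 * (nm z)^2" unfolding n1 by (simp add: power_mult_distrib)
    have n3: "d \<le> (nm z)^2" unfolding z_def using low zM by blast
    have n4: "a - b = X k - X j" unfolding a_def b_def by simp
    have n5: "(nm a)^2 < d + 1 / (real j + 1)" "(nm b)^2 < d + 1 / (real k + 1)"
      unfolding a_def b_def using X(2) by auto
    have n6: "(nm (a + b))^2 + (nm (X k - X j))^2 = 2 * (nm a)^2 + 2 * (nm b)^2"
      using para[of a b] unfolding n4 .
    have "(nm (X k - X j))^2 < 2 * (1 / (real j + 1)) + 2 * (1 / (real k + 1))"
      using n2 n3 n5 n6 by linarith
    thus ?thesis using nm_commute[of "X k" "X j"] by simp
  qed
  have cX: "cauchy X" unfolding cauchy_def
  proof (intro allI impI)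
    fix e :: real assume e: "e > 0"
    obtain N :: nat where N: "4 / (e^2) < real N" using reals_Archimedean2 by blast
    have e2: "0 < e^2" using e by simp
    have "4 < real N * e^2" using N e by (simp add: field_simps)
    moreover have "(real N + 1) * e^2 = real N * e^2 + e^2" by (simp add: algebra_simps)
    ultimately have "4 < (real N + 1) * e^2" using e2 by linarith
    then have N4: "4 / (real N + 1) < e^2" by (simp add: field_simps)
    have N5: "4 / (real N + 1) = 4 * (1 / (real N + 1))" by simp
    show "\<exists>N. \<forall>m\<ge>N. \<forall>n\<ge>N. nm (X m - X n) < e"
    proof (intro exI allI impI)
      fix m n assume mn: "N \<le> m" "N \<le> n"
      have "1 / (real m + 1) \<le> 1 / (real N + 1)" "1 / (real n + 1) \<le> 1 / (real N + 1)"
        using mn by (auto intro!: divide_left_mono)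
      then have "(nm (X m - X n))^2 < e^2" using pb[of m n] N4 N5 by linarith
      thus "nm (X m - X n) < e" using e sq_less less_imp_le by blast
    qed
  qed
  obtain p where pM: "p \<in> M" and pc: "conv X p" using Mcomp[OF _ cX] X(1) by blast
  have pd: "(nm (x - p))^2 \<le> d"
  proof (rule ccontr)
    assume "\<not> ?thesis"
    define s where "s = sqrt d"
    have ss: "s^2 = d" "s \<ge> 0" unfolding s_def using d0 by auto
    have "nm (x - p) > s"
    proof (rule ccontr)
      assume "\<not> s < nm (x - p)"
      then have "nm (x - p) \<le> s" by simp
      then have "(nm (x - p))^2 \<le> s^2" using nm_nonneg by (rule power_mono)
      thus False using \<open>\<not> (nm (x - p))^2 \<le> d\<close> ss by simp
    qed
    define e where "e = nm (x - p) - s"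
    have e: "e > 0" using \<open>nm (x - p) > s\<close> unfolding e_def by simp
    have e2: "e / 2 > 0" using e by simp
    obtain N1 where N1: "\<forall>n\<ge>N1. nm (X n - p) < e / 2" using pc e2 unfolding conv_def
      by blast
    obtain N2 :: nat where N2: "4 / (e^2) < real N2" using reals_Archimedean2 by blast
    define k where "k = max N1 N2"
    have "real N2 \<le> real k" unfolding k_def by simp
    then have ek: "4 / e^2 < real k + 1" using N2 by simp
    have "1 / (real k + 1) < e^2 / 4" using ek e by (simp add: field_simps)
    then have "(nm (x - X k))^2 < d + e^2 / 4" using X(2)[of k] by simp
    also have "\<dots> \<le> (s + e/2)^2"
    proof -
      have "(s + e/2)^2 = s^2 + s * e + e^2/4" by (simp add: power2_eq_square algebra_simps)
      moreover have "0 \<le> s * e" using ss e by simp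
      ultimately show ?thesis using ss by linarith
    qed
    finally have "nm (x - X k) < s + e/2" using ss e sq_less[of "nm (x - X k)" "s + e/2"] by simp
    moreover have "nm (X k - p) < e / 2" using N1 unfolding k_def by simp
    moreover have "nm (x - p) \<le> nm (x - X k) + nm (X k - p)" by (rule nm_tri3)
    ultimately show False using e_def by linarith
  qed
  show ?thesis
  proof (intro bexI[OF _ pM] ballI)
    fix m assume mM: "m \<in> M"
    show "ip (x - p) m = 0"
    proof (cases "m = 0")
      case True thus ?thesis by simp
    next
      case False
      define t where "t = ip (x - p) m / ip m m"
      have qM: "p + sc t m \<in> M" using pM mM Madd Msc by blast
      have eq: "x - (p + sc t m) = (x - p) - sc t m" by simp
      have "(nm (x - (p + sc t m)))^2 = Re (ip ((x - p) - sc t m) ((x - p) - sc t m))"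
        unfolding eq nm_sq ..
      also have "\<dots> = (nm (x - p))^2 - (cmod (ip (x - p) m))^2 / (nm m)^2"
        unfolding t_def by (rule key[OF False])
      finally have "(nm (x - (p + sc t m)))^2 = (nm (x - p))^2 - (cmod (ip (x - p) m))^2 / (nm m)^2" .
      moreover have "(nm (x - p))^2 \<le> (nm (x - (p + sc t m)))^2" using pd low[OF qM] by linarith
      ultimately have h: "(cmod (ip (x - p) m))^2 / (nm m)^2 \<le> 0" by linarith
      have "nm m > 0" using False nm_zero_iff nm_nonneg by (metis less_eq_real_def)
      then have "(nm m)^2 > 0" by simp
      with h have "(cmod (ip (x - p) m))^2 \<le> 0" by (simp add: divide_le_0_iff)
      thus ?thesis by simp
    qed
  qed
qed


lemma riesz:
  assumes fadd: "\<And>x y. f (x + y) = f x + f y"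
    and fsc: "\<And>c x. f (sc c x) = c * f x"
    and fb: "\<And>x. cmod (f x) \<le> C * nm x"
  shows "\<exists>r. \<forall>x. f x = ip x r"
proof (cases "\<forall>x. f x = 0")
  case True thus ?thesis by (intro exI[of _ 0]) simp
next
  case False
  then obtain z where fz: "f z \<noteq> 0" by blast
  have f0: "f 0 = 0" using fadd[of 0 0] by simp
  have fdiff: "f (a - b) = f a - f b" for a b
    using fadd[of "a - b" b] by simp
  define M where "M = {x. f x = 0}"
  have "\<exists>p\<in>M. \<forall>m\<in>M. ip (z - p) m = 0"
  proof (rule proj)
    show "0 \<in> M" using f0 unfolding M_def by simp
    show "a + b \<in> M" if "a \<in> M" "b \<in> M" for a b using that fadd unfolding M_def by simp
    show "sc c a \<in> M" if "a \<in> M" for c a using that fsc unfolding M_def by simp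
    show "\<exists>l\<in>M. conv X l" if X: "\<forall>k. X k \<in> M" and cX: "cauchy X" for X
    proof -
      obtain l where l: "conv X l" using complete'[OF cX] by blast
      have "cmod (f l) \<le> 0"
      proof (rule small_le0[of "max C 0"])
        show "0 \<le> max C 0" by simp
        show "\<forall>e>0. cmod (f l) \<le> max C 0 * e"
        proof (intro allI impI)
          fix e :: real assume "e > 0"
          then obtain N where N: "\<forall>n\<ge>N. nm (X n - l) < e" using l unfolding conv_def by blast
          have "f (X N) = 0" using X unfolding M_def by blast
          then have "f l = - f (X N - l)" using fdiff[of "X N" l] by simp
          then have "cmod (f l) = cmod (f (X N - l))" by simp
          also have "\<dots> \<le> C * nm (X N - l)" by (rule fb)
          also have "\<dots> \<le> max C 0 * nm (X N - l)" using nm_nonneg by (simp add: mult_right_mono)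
          also have "\<dots> \<le> max C 0 * e" using N by (simp add: mult_left_mono less_imp_le)
          finally show "cmod (f l) \<le> max C 0 * e" .
        qed
      qed
      then have "l \<in> M" unfolding M_def by simp
      with l show ?thesis by blast
    qed
  qed
  then obtain p where pM: "p \<in> M" and orth: "\<And>m. m \<in> M \<Longrightarrow> ip (z - p) m = 0" by blast
  define z0 where "z0 = z - p"
  have fz0: "f z0 = f z" unfolding z0_def fdiff using pM unfolding M_def by simp
  have z0: "z0 \<noteq> 0" using fz0 fz f0 by auto
  have ipz: "ip z0 z0 \<noteq> 0" using z0 ip_def0 by blast
  define r where "r = sc (cnj (f z0 / ip z0 z0)) z0"
  show ?thesis
  proof (intro exI allI)
    fix x
    define m where "m = sc (f x) z0 - sc (f z0) x"
    have "f m = 0" unfolding m_def fdiff fsc by simp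
    then have "ip z0 m = 0" using orth unfolding M_def z0_def by simp
    then have "ip m z0 = 0" using ip_cnj[of z0 m] by simp
    then have "f x * ip z0 z0 - f z0 * ip x z0 = 0" unfolding m_def ip_diff1 ip_sc1 .
    then have "f x = f z0 * ip x z0 / ip z0 z0" using ipz by (simp add: field_simps)
    also have "\<dots> = ip x r" unfolding r_def ip_sc2 by simp
    finally show "f x = ip x r" .
  qed
qed


lemma ip_ext: "(\<And>x. ip x a = ip x b) \<Longrightarrow> a = b"
proof -
  assume h: "\<And>x. ip x a = ip x b"
  have "ip (a - b) (a - b) = 0" unfolding ip_diff2 using h by simp
  then have "a - b = 0" by (rule ip_def0)
  thus ?thesis by simp
qed

lemma nm_pos: "x \<noteq> 0 \<Longrightarrow> nm x > 0" using nm_zero_iff nm_nonneg by (metis less_eq_real_def)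

end

lemma sup_zero_imp:
  assumes "ennreal (l * a) \<le> (SUP w\<in>S. ennreal (g w))" "\<And>w. w \<in> S \<Longrightarrow> g w = 0" "l > 0" "a \<ge> 0"
  shows "a = (0::real)"
proof -
  have "(SUP w\<in>S. ennreal (g w)) = (SUP w\<in>S. (0::ennreal))" using assms(2) by (intro SUP_cong) auto
  also have "\<dots> = 0" by (simp add: bot_ennreal[symmetric])
  finally have "ennreal (l * a) \<le> 0" using assms(1) by simp
  then have "l * a \<le> 0" using ennreal_eq_0_iff by auto
  thus ?thesis using assms(3,4) by (simp add: mult_le_0_iff)
qed


lemma uniq2:
  fixes bb :: "'a::ab_group_add \<Rightarrow> 'b::ab_group_add \<Rightarrow> complex"
  assumes h1: "complex_hilbert s1 i1" and h2: "complex_hilbert s2 i2"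
    and is1: "\<forall>v. ennreal (la * hnorm i2 v) \<le> (SUP w\<in>{w. w \<noteq> 0}. ennreal (cmod (bb w v) / hnorm i1 w))"
    and la: "0 < la"
    and z: "\<And>\<phi>. bb \<phi> v = 0"
  shows "v = 0"
proof -
  interpret B: chs s2 i2 by (rule chs.intro, rule h2)
  have "hnorm i2 v = 0"
    by (rule sup_zero_imp[OF is1[rule_format, of v] _ la B.nm_nonneg]) (simp add: z)
  thus ?thesis using B.nm_zero_iff by simp
qed

lemma solve:
  fixes bb :: "'a::ab_group_add \<Rightarrow> 'b::ab_group_add \<Rightarrow> complex"
  assumes h1: "complex_hilbert s1 i1" and h2: "complex_hilbert s2 i2"
    and badd2: "\<And>x y y'. bb x (y + y') = bb x y + bb x y'"
    and bsc2: "\<And>c x y. bb x (s2 c y) = c * bb x y"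
    and badd1: "\<And>x x' y. bb (x + x') y = bb x y + bb x' y"
    and bsc1: "\<And>c x y. bb (s1 c x) y = c * bb x y"
    and bbd: "\<And>x y. cmod (bb x y) \<le> K * hnorm i1 x * hnorm i2 y"
    and is1: "\<forall>v. ennreal (la * hnorm i2 v) \<le> (SUP w\<in>{w. w \<noteq> 0}. ennreal (cmod (bb w v) / hnorm i1 w))"
    and is2: "\<forall>u. ennreal (la * hnorm i1 u) \<le> (SUP w\<in>{w. w \<noteq> 0}. ennreal (cmod (bb u w) / hnorm i2 w))"
    and la: "0 < la"
    and fadd: "\<And>x y. H (x + y) = H x + H y"
    and fsc: "\<And>c x. H (s1 c x) = c * H x"
    and fb: "\<And>x. cmod (H x) \<le> C * hnorm i1 x"
  shows "\<exists>v. \<forall>\<phi>. bb \<phi> v = H \<phi>"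
proof -
  interpret A: chs s1 i1 by (rule chs.intro, rule h1)
  interpret B: chs s2 i2 by (rule chs.intro, rule h2)
  define K' where "K' = max K 0"
  have K': "K' \<ge> 0" unfolding K'_def by simp
  have bbd': "cmod (bb x y) \<le> K' * hnorm i1 x * hnorm i2 y" for x y
  proof -
    have "K * hnorm i1 x * hnorm i2 y \<le> K' * hnorm i1 x * hnorm i2 y"
      unfolding K'_def using A.nm_nonneg B.nm_nonneg by (intro mult_right_mono) auto
    thus ?thesis using bbd[of x y] by linarith
  qed
  have exrep: "\<exists>r. \<forall>\<phi>. bb \<phi> v = i1 \<phi> r" for v
  proof (rule A.riesz[where C = "K' * hnorm i2 v"])
    show "bb (x + y) v = bb x v + bb y v" for x y by (rule badd1)
    show "bb (s1 c x) v = c * bb x v" for c x by (rule bsc1)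
    show "cmod (bb x v) \<le> K' * hnorm i2 v * hnorm i1 x" for x using bbd'[of x v] by (simp add: algebra_simps)
  qed
  define rep where "rep v = (SOME r. \<forall>\<phi>. bb \<phi> v = i1 \<phi> r)" for v
  have repP: "bb \<phi> v = i1 \<phi> (rep v)" for \<phi> v
    unfolding rep_def using someI_ex[OF exrep[of v]] by blast
  have rep_add: "rep (v + w) = rep v + rep w" for v w
    by (rule A.ip_ext) (simp add: A.ip_add2 repP[symmetric] badd2)
  have rep_sc: "s1 c (rep v) = rep (s2 (cnj c) v)" for c v
    by (rule A.ip_ext) (simp add: A.ip_sc2 repP[symmetric] bsc2)
  have rep_diff: "rep (v - w) = rep v - rep w" for v w
    using rep_add[of "v - w" w] by simp
  have rep_low: "la * hnorm i2 v \<le> hnorm i1 (rep v)" for v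
  proof -
    have "(SUP w\<in>{w. w \<noteq> 0}. ennreal (cmod (bb w v) / hnorm i1 w)) \<le> ennreal (hnorm i1 (rep v))"
    proof (rule SUP_least)
      fix w :: 'a assume "w \<in> {w. w \<noteq> 0}"
      then have wp: "hnorm i1 w > 0" using A.nm_pos by simp
      have "cmod (bb w v) \<le> hnorm i1 w * hnorm i1 (rep v)" unfolding repP by (rule A.cs)
      then have "cmod (bb w v) / hnorm i1 w \<le> hnorm i1 (rep v)" using wp by (simp add: field_simps)
      thus "ennreal (cmod (bb w v) / hnorm i1 w) \<le> ennreal (hnorm i1 (rep v))" by (rule ennreal_leI)
    qed
    then have "ennreal (la * hnorm i2 v) \<le> ennreal (hnorm i1 (rep v))" using is1 order_trans by blast
    thus ?thesis using A.nm_nonneg by (simp add: ennreal_le_iff)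
  qed
  have rep_up: "hnorm i1 (rep v) \<le> K' * hnorm i2 v" for v
  proof (cases "rep v = 0")
    case True thus ?thesis using K' B.nm_nonneg by simp
  next
    case False
    then have p: "hnorm i1 (rep v) > 0" by (rule A.nm_pos)
    have "(hnorm i1 (rep v))^2 = Re (bb (rep v) v)" unfolding repP A.nm_sq ..
    also have "\<dots> \<le> cmod (bb (rep v) v)" by (rule complex_Re_le_cmod)
    also have "\<dots> \<le> K' * hnorm i1 (rep v) * hnorm i2 v" by (rule bbd')
    finally have "hnorm i1 (rep v) * hnorm i1 (rep v) \<le> hnorm i1 (rep v) * (K' * hnorm i2 v)"
      by (simp add: power2_eq_square algebra_simps)
    thus ?thesis using p by simp
  qed
  obtain h where hP: "\<And>\<phi>. H \<phi> = i1 \<phi> h" using A.riesz[OF fadd fsc fb] by blast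
  have "\<exists>p\<in>range rep. \<forall>m\<in>range rep. i1 (h - p) m = 0"
  proof (rule A.proj)
    show "0 \<in> range rep" using rep_diff[of 0 0] by (metis diff_self rangeI)
    show "a + b \<in> range rep" if ab: "a \<in> range rep" "b \<in> range rep" for a b
    proof -
      obtain v w where "a = rep v" "b = rep w" using ab by blast
      then have "a + b = rep (v + w)" by (simp add: rep_add)
      thus ?thesis by blast
    qed
    show "s1 c a \<in> range rep" if ab: "a \<in> range rep" for c a
    proof -
      obtain v where "a = rep v" using ab by blast
      then have "s1 c a = rep (s2 (cnj c) v)" by (simp add: rep_sc)
      thus ?thesis by blast
    qed
    show "\<exists>l\<in>range rep. A.conv X l" if X: "\<forall>k. X k \<in> range rep" and cX: "A.cauchy X" for X
    proof -
      define V where "V k = (SOME v. X k = rep v)" for k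
      have XV: "X k = rep (V k)" for k unfolding V_def using X by (metis (mono_tags, lifting) image_iff someI_ex)
      have "B.cauchy V" unfolding B.cauchy_def
      proof (intro allI impI)
        fix e :: real assume e: "e > 0"
        then obtain N where N: "\<forall>m\<ge>N. \<forall>n\<ge>N. hnorm i1 (X m - X n) < la * e"
          using cX la unfolding A.cauchy_def by (meson mult_pos_pos)
        show "\<exists>N. \<forall>m\<ge>N. \<forall>n\<ge>N. hnorm i2 (V m - V n) < e"
        proof (intro exI allI impI)
          fix m n assume "N \<le> m" "N \<le> n"
          then have "hnorm i1 (X m - X n) < la * e" using N by blast
          moreover have "la * hnorm i2 (V m - V n) \<le> hnorm i1 (X m - X n)"
            unfolding XV rep_diff[symmetric] by (rule rep_low)
          ultimately have "la * hnorm i2 (V m - V n) < la * e" by linarith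
          thus "hnorm i2 (V m - V n) < e" using la by simp
        qed
      qed
      then obtain v where v: "B.conv V v" using B.complete' by blast
      have "A.conv X (rep v)" unfolding A.conv_def
      proof (intro allI impI)
        fix e :: real assume e: "e > 0"
        have e': "e / (K' + 1) > 0" using e K' by simp
        then obtain N where N: "\<forall>n\<ge>N. hnorm i2 (V n - v) < e / (K' + 1)"
          using v unfolding B.conv_def by blast
        show "\<exists>N. \<forall>n\<ge>N. hnorm i1 (X n - rep v) < e"
        proof (intro exI allI impI)
          fix n assume "N \<le> n"
          then have a: "hnorm i2 (V n - v) < e / (K' + 1)" using N by blast
          have "hnorm i1 (X n - rep v) \<le> K' * hnorm i2 (V n - v)"
            unfolding XV rep_diff[symmetric] by (rule rep_up)
          also have "\<dots> \<le> K' * (e / (K' + 1))" using a K' by (intro mult_left_mono) auto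
          also have "\<dots> < e" using e K' by (simp add: field_simps)
          finally show "hnorm i1 (X n - rep v) < e" .
        qed
      qed
      thus ?thesis by blast
    qed
  qed
  then obtain v where orth: "\<And>m. m \<in> range rep \<Longrightarrow> i1 (h - rep v) m = 0" by blast
  have "hnorm i1 (h - rep v) = 0"
  proof (rule sup_zero_imp[OF is2[rule_format, of "h - rep v"] _ la A.nm_nonneg])
    fix w show "cmod (bb (h - rep v) w) / hnorm i2 w = 0" using orth[of "rep w"] by (simp add: repP)
  qed
  then have "h = rep v" using A.nm_zero_iff by simp
  then show ?thesis using hP repP by metis
qed



lemma qnorm_le: assumes "\<And>x. 0 \<le> N x" shows "qnorm N R (R x) \<le> N x"
  unfolding qnorm_def by (rule cInf_lower) (auto intro: bdd_belowI[of _ 0] simp: assms)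

lemma qnorm_ge: assumes "\<And>x. 0 \<le> N x" "y \<in> range R" shows "0 \<le> qnorm N R y"
  unfolding qnorm_def using assms(2) by (intro cInf_greatest) (auto simp: assms(1))

lemma le_c_Inf:
  fixes a c :: real
  assumes c: "0 \<le> c" and ne: "S \<noteq> {}" and h: "\<And>s. s \<in> S \<Longrightarrow> a \<le> c * s"
  shows "a \<le> c * Inf S"
proof (cases "c = 0")
  case True
  from ne obtain s where "s \<in> S" by blast
  with h True show ?thesis by simp
next
  case False
  then have c': "c > 0" using c by simp
  have "a / c \<le> Inf S" using ne by (rule cInf_greatest) (use h c' in \<open>simp add: field_simps\<close>)
  thus ?thesis using c' by (simp add: field_simps)
qed

lemma bil_bound:
  assumes "bounded_bilin_on A sa Na C sc Nc b" "\<And>x. x \<in> A \<Longrightarrow> 0 \<le> Na x" "\<And>y. y \<in> C \<Longrightarrow> 0 \<le> Nc y"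
  shows "\<exists>K\<ge>0. \<forall>x\<in>A. \<forall>y\<in>C. cmod (b x y) \<le> K * Na x * Nc y"
proof -
  obtain K where K: "\<forall>x\<in>A. \<forall>y\<in>C. cmod (b x y) \<le> K * Na x * Nc y"
    using assms(1) unfolding bounded_bilin_on_def by blast
  have "\<forall>x\<in>A. \<forall>y\<in>C. cmod (b x y) \<le> max K 0 * Na x * Nc y"
  proof (intro ballI)
    fix x y assume xy: "x \<in> A" "y \<in> C"
    have "K * Na x * Nc y \<le> max K 0 * Na x * Nc y"
      using assms(2)[OF xy(1)] assms(3)[OF xy(2)] by (intro mult_right_mono) auto
    moreover have "cmod (b x y) \<le> K * Na x * Nc y" using K xy by blast
    ultimately show "cmod (b x y) \<le> max K 0 * Na x * Nc y" by linarith
  qed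
  thus ?thesis by (intro exI[of _ "max K 0"]) auto
qed

lemma func_ok:
  assumes bb: "bounded_bilin_on (range r1) s1' (qnorm n1 r1) (range r2) s2' (qnorm n2 r2) b"
   and lin: "Vector_Spaces.linear s1 s1' r1"
   and n1: "\<And>x. 0 \<le> n1 x" and n2: "\<And>x. 0 \<le> n2 x" and c: "c \<in> range r2"
  shows "(\<forall>x y. b (r1 (x + y)) c = b (r1 x) c + b (r1 y) c) \<and> (\<forall>k x. b (r1 (s1 k x)) c = k * b (r1 x) c)
     \<and> (\<exists>C\<ge>0. \<forall>x. cmod (b (r1 x) c) \<le> C * n1 x)"
proof (intro conjI allI)
  have ba: "\<forall>x\<in>range r1. \<forall>x'\<in>range r1. \<forall>y\<in>range r2. b (x + x') y = b x y + b x' y"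
    using bb unfolding bounded_bilin_on_def by blast
  have bs: "\<forall>k. \<forall>x\<in>range r1. \<forall>y\<in>range r2. b (s1' k x) y = k * b x y"
    using bb unfolding bounded_bilin_on_def by blast
  fix x y show "b (r1 (x + y)) c = b (r1 x) c + b (r1 y) c"
    unfolding lin_add[OF lin] using ba[rule_format, OF rangeI rangeI c] .
  fix k show "b (r1 (s1 k x)) c = k * b (r1 x) c"
    unfolding lin_scale[OF lin] using bs[rule_format, OF rangeI c] .
next
  obtain K where K: "K \<ge> 0" "\<forall>x\<in>range r1. \<forall>y\<in>range r2. cmod (b x y) \<le> K * qnorm n1 r1 x * qnorm n2 r2 y"
    using bil_bound[OF bb qnorm_ge[OF n1] qnorm_ge[OF n2]] by blast
  have q2: "0 \<le> qnorm n2 r2 c" using qnorm_ge[OF n2 c] .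
  show "\<exists>C\<ge>0. \<forall>x. cmod (b (r1 x) c) \<le> C * n1 x"
  proof (intro exI[of _ "K * qnorm n2 r2 c"] conjI allI)
    show "0 \<le> K * qnorm n2 r2 c" using K q2 by simp
    fix x
    have "cmod (b (r1 x) c) \<le> K * qnorm n1 r1 (r1 x) * qnorm n2 r2 c" using K(2) c by (simp only: ball_simps) (blast)
    also have "\<dots> = (K * qnorm n2 r2 c) * qnorm n1 r1 (r1 x)" by simp
    also have "\<dots> \<le> (K * qnorm n2 r2 c) * n1 x" using K q2 qnorm_le[OF n1] by (intro mult_left_mono) auto
    finally show "cmod (b (r1 x) c) \<le> K * qnorm n2 r2 c * n1 x" .
  qed
qed


theorem lemma5p2:
  fixes F :: "('h1::ab_group_add, 'h2::ab_group_add, 'o1::ab_group_add, 'o2::ab_group_add,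
      'c1::ab_group_add, 'c2::ab_group_add, 'd1::ab_group_add, 'd2::ab_group_add) frame"
    and u :: "'o2" and U :: "'h2"
  assumes "abstract_framework F"
    and "u \<in> HO2 F"
    and "L_Omega_zero F u"
    and "rO2 F U = u"
  shows "u = - double_layer_Om F (tr2 F U) + rO2 F (single_layer F (neumann F u))
         \<and> 0 = double_layer_C F (tr2 F U) + rC2 F (single_layer F (neumann F u))"
proof -
  note AF = assms(1)[unfolded abstract_framework_def]
  have h1: "complex_hilbert (sc1 F) (ip1 F)" using AF by blast
  have h2: "complex_hilbert (sc2 F) (ip2 F)" using AF by blast
  interpret A: chs "sc1 F" "ip1 F" by (rule chs.intro, rule h1)
  interpret B: chs "sc2 F" "ip2 F" by (rule chs.intro, rule h2)
  have lt1: "Vector_Spaces.linear (sc1 F) (scD1 F) (tr1 F)" using AF unfolding bounded_lin_def by blast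
  have lt2: "Vector_Spaces.linear (sc2 F) (scD2 F) (tr2 F)" using AF unfolding bounded_lin_def by blast
  have lO1: "Vector_Spaces.linear (sc1 F) (scO1 F) (rO1 F)" using AF unfolding bounded_lin_def by blast
  have lO2: "Vector_Spaces.linear (sc2 F) (scO2 F) (rO2 F)" using AF unfolding bounded_lin_def by blast
  have lC1: "Vector_Spaces.linear (sc1 F) (scC1 F) (rC1 F)" using AF unfolding bounded_lin_def by blast
  have lC2: "Vector_Spaces.linear (sc2 F) (scC2 F) (rC2 F)" using AF unfolding bounded_lin_def by blast
  have bfb: "bounded_bilin_on UNIV (sc1 F) (hnorm (ip1 F)) UNIV (sc2 F) (hnorm (ip2 F)) (bf F)" using AF by blast
  have bOb: "bounded_bilin_on (range (rO1 F)) (scO1 F) (qnorm (hnorm (ip1 F)) (rO1 F))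
                      (range (rO2 F)) (scO2 F) (qnorm (hnorm (ip2 F)) (rO2 F)) (bO F)" using AF by blast
  have bCb: "bounded_bilin_on (range (rC1 F)) (scC1 F) (qnorm (hnorm (ip1 F)) (rC1 F))
                      (range (rC2 F)) (scC2 F) (qnorm (hnorm (ip2 F)) (rC2 F)) (bC F)" using AF by blast
  have lam: "0 < lam F" using AF by blast
  have is1: "\<forall>v. ennreal (lam F * hnorm (ip2 F) v)
            \<le> (SUP w\<in>{w. w \<noteq> 0}. ennreal (cmod (bf F w v) / hnorm (ip1 F) w))" using AF by blast
  have is2: "\<forall>u. ennreal (lam F * hnorm (ip1 F) u)
            \<le> (SUP w\<in>{w. w \<noteq> 0}. ennreal (cmod (bf F u w) / hnorm (ip2 F) w))" using AF by blast
  have split: "\<And>u v. bf F u v = bO F (rO1 F u) (rO2 F v) + bC F (rC1 F u) (rC2 F v)" using AF by blast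
  have glue2: "\<forall>\<phi> \<psi>. tr2 F \<phi> = tr2 F \<psi> \<longrightarrow>
        (\<exists>w. rO2 F w = rO2 F \<phi> \<and> rC2 F w = rC2 F \<psi> \<and> tr2 F w = tr2 F \<phi>)" using AF by blast
  have badd1: "\<And>x x' y. bf F (x + x') y = bf F x y + bf F x' y" using bfb unfolding bounded_bilin_on_def by blast
  have bsc1: "\<And>c x y. bf F (sc1 F c x) y = c * bf F x y" using bfb unfolding bounded_bilin_on_def by blast
  have badd2: "\<And>x y y'. bf F x (y + y') = bf F x y + bf F x y'" using bfb unfolding bounded_bilin_on_def by blast
  have bsc2: "\<And>c x y. bf F x (sc2 F c y) = c * bf F x y" using bfb unfolding bounded_bilin_on_def by blast
  obtain K where bbd: "\<And>x y. cmod (bf F x y) \<le> K * hnorm (ip1 F) x * hnorm (ip2 F) y"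
    using bfb unfolding bounded_bilin_on_def by blast
  have bdiff2: "bf F x (y - y') = bf F x y - bf F x y'" for x y y'
    using badd2[of x "y - y'" y'] by simp
  have uq: "v = v'" if h: "\<And>\<phi>. bf F \<phi> v = bf F \<phi> v'" for v v'
  proof -
    have "v - v' = 0" by (rule uniq2[OF h1 h2 is1 lam]) (simp add: bdiff2 h)
    thus ?thesis by simp
  qed
  note solve' = solve[OF h1 h2 badd2 bsc2 badd1 bsc1 bbd is1 is2 lam]

  have uR: "u \<in> range (rO2 F)" using assms(2) unfolding HO2_def .
  define Hn where "Hn \<phi> = bO F (rO1 F \<phi>) u" for \<phi>
  note fO = func_ok[OF bOb lO1 A.nm_nonneg B.nm_nonneg uR]
  have Hnadd: "Hn (x + y) = Hn x + Hn y" for x y using fO unfolding Hn_def by blast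
  have Hnsc: "Hn (sc1 F c x) = c * Hn x" for c x using fO unfolding Hn_def by blast
  obtain C where C: "C \<ge> 0" "\<And>x. cmod (Hn x) \<le> C * hnorm (ip1 F) x" using fO unfolding Hn_def by blast
  have wd: "Hn \<phi> = Hn \<psi>" if t: "tr1 F \<phi> = tr1 F \<psi>" for \<phi> \<psi>
  proof -
    have "tr1 F (\<phi> - \<psi>) = 0" using t lin_diff[OF lt1] by simp
    then have "Hn (\<phi> - \<psi>) = 0" using assms(3) unfolding L_Omega_zero_def Hn_def by blast
    moreover have "Hn \<phi> = Hn (\<phi> - \<psi>) + Hn \<psi>" using Hnadd[of "\<phi> - \<psi>" \<psi>] by simp
    ultimately show ?thesis by simp
  qed
  define g0 where "g0 x = (if x \<in> range (tr1 F) then Hn (SOME \<phi>. tr1 F \<phi> = x) else 0)" for x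
  have g0tr: "g0 (tr1 F \<phi>) = Hn \<phi>" for \<phi>
  proof -
    have "tr1 F (SOME \<psi>. tr1 F \<psi> = tr1 F \<phi>) = tr1 F \<phi>" by (rule someI) (rule refl)
    then have "Hn (SOME \<psi>. tr1 F \<psi> = tr1 F \<phi>) = Hn \<phi>" by (rule wd)
    then show ?thesis unfolding g0_def by simp
  qed
  have g0N: "g0 \<in> N2 F"
    unfolding N2_def
  proof (intro CollectI conjI ballI allI impI)
    fix x y assume "x \<in> range (tr1 F)" "y \<in> range (tr1 F)"
    then obtain \<phi> \<psi> where xy: "x = tr1 F \<phi>" "y = tr1 F \<psi>" by blast
    have "x + y = tr1 F (\<phi> + \<psi>)" unfolding xy lin_add[OF lt1] ..
    then show "g0 (x + y) = g0 x + g0 y" unfolding xy by (simp add: g0tr Hnadd)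
  next
    fix c x assume "x \<in> range (tr1 F)"
    then obtain \<phi> where xy: "x = tr1 F \<phi>" by blast
    have "scD1 F c x = tr1 F (sc1 F c \<phi>)" unfolding xy lin_scale[OF lt1] ..
    then show "g0 (scD1 F c x) = c * g0 x" unfolding xy by (simp add: g0tr Hnsc)
  next
    fix x assume "x \<notin> range (tr1 F)"
    then show "g0 x = 0" unfolding g0_def by simp
  next
    show "\<exists>K. \<forall>x\<in>range (tr1 F). cmod (g0 x) \<le> K * qnorm (hnorm (ip1 F)) (tr1 F) x"
    proof (intro exI ballI)
      fix x assume "x \<in> range (tr1 F)"
      then obtain \<phi> where xy: "x = tr1 F \<phi>" by blast
      show "cmod (g0 x) \<le> C * qnorm (hnorm (ip1 F)) (tr1 F) x"
        unfolding qnorm_def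
      proof (rule le_c_Inf[OF C(1)])
        show "hnorm (ip1 F) ` {Fa. tr1 F Fa = x} \<noteq> {}" using xy by blast
        fix s assume "s \<in> hnorm (ip1 F) ` {Fa. tr1 F Fa = x}"
        then obtain \<psi> where \<psi>: "tr1 F \<psi> = x" "s = hnorm (ip1 F) \<psi>" by blast
        have "g0 x = Hn \<psi>" using g0tr[of \<psi>] \<psi>(1) by simp
        then show "cmod (g0 x) \<le> C * s" using C(2)[of \<psi>] \<psi>(2) by simp
      qed
    qed
  qed
  define P where "P g = (g \<in> N2 F \<and> (\<forall>\<phi>. g (tr1 F \<phi>) = bO F (rO1 F \<phi>) u))" for g
  have Pg0: "P g0" unfolding P_def using g0N g0tr unfolding Hn_def by simp
  have Pun: "g = g0" if "P g" for g
  proof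
    fix x show "g x = g0 x"
    proof (cases "x \<in> range (tr1 F)")
      case True
      then obtain \<phi> where xy: "x = tr1 F \<phi>" by blast
      show ?thesis using that unfolding P_def xy g0tr Hn_def by simp
    next
      case False
      then show ?thesis using that g0N unfolding P_def N2_def by simp
    qed
  qed
  have "P (neumann F u)" unfolding neumann_def P_def[symmetric] by (rule theI[of P g0, OF Pg0 Pun])
  then have gN: "\<And>\<phi>. neumann F u (tr1 F \<phi>) = bO F (rO1 F \<phi>) u" unfolding P_def by blast

  define G where "G = (SOME G. tr2 F G = tr2 F U)"
  have hG: "tr2 F G = tr2 F U" unfolding G_def by (rule someI) (rule refl)
  obtain W where W: "rO2 F W = rO2 F U" "rC2 F W = rC2 F G" "tr2 F W = tr2 F U"
    using glue2 hG by metis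

  define HC where "HC = L_C F (rC2 F G)"
  have HCe: "HC \<phi> = bC F (rC1 F \<phi>) (rC2 F G)" for \<phi> unfolding HC_def L_C_def ..
  note fC = func_ok[OF bCb lC1 A.nm_nonneg B.nm_nonneg rangeI[of "rC2 F" G]]
  have HCadd: "HC (x + y) = HC x + HC y" for x y using fC unfolding HCe by blast
  have HCsc: "HC (sc1 F c x) = c * HC x" for c x using fC unfolding HCe by blast
  obtain C2 where C2: "\<And>x. cmod (HC x) \<le> C2 * hnorm (ip1 F) x" using fC unfolding HCe by blast
  obtain NC where NC: "\<And>\<phi>. bf F \<phi> NC = HC \<phi>" using solve'[OF HCadd HCsc C2] by blast
  have nC: "newton F HC = NC" unfolding newton_def
    by (rule the_equality) (use NC uq in auto)
  have GNC: "bf F \<phi> (G - NC) = L_Om F (rO2 F G) \<phi>" for \<phi>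
    by (simp only: bdiff2 NC) (simp add: split[of _ G] HCe L_Om_def)
  have nO: "newton F (L_Om F (rO2 F G)) = G - NC" unfolding newton_def
  proof (rule the_equality)
    show "\<forall>\<phi>. bf F \<phi> (G - NC) = L_Om F (rO2 F G) \<phi>" using GNC by blast
    fix v assume "\<forall>\<phi>. bf F \<phi> v = L_Om F (rO2 F G) \<phi>"
    then show "v = G - NC" using GNC uq by metis
  qed
  have WNC: "bf F \<phi> (W - NC) = neumann F u (tr1 F \<phi>)" for \<phi>
    by (simp only: bdiff2 NC) (simp add: split[of _ W] HCe gN W assms(4))
  have sl: "single_layer F (neumann F u) = W - NC" unfolding single_layer_def
  proof (rule the_equality)
    show "\<forall>\<phi>. bf F \<phi> (W - NC) = neumann F u (tr1 F \<phi>)" using WNC by blast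
    fix v assume "\<forall>\<phi>. bf F \<phi> v = neumann F u (tr1 F \<phi>)"
    then show "v = W - NC" using WNC uq by metis
  qed
  have dO: "double_layer_Om F (tr2 F U) = - rO2 F NC"
    unfolding double_layer_Om_def Let_def G_def[symmetric] nO lin_diff[OF lO2] by simp
  have dC: "double_layer_C F (tr2 F U) = - rC2 F G + rC2 F NC"
    unfolding double_layer_C_def Let_def G_def[symmetric] HC_def[symmetric] nC ..
  show ?thesis
    unfolding dO dC sl lin_diff[OF lO2] lin_diff[OF lC2] W assms(4) by simp
qed

end
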